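(* Let $b$ be a prime, $s,m\in\mathbb{N}$, and let $C_1^{(m)},\dots,C_s^{(m)}$ be the left upper $m\times m$ submatrices of the generating matrices of a digital $(t,s)$-sequence over $\mathbb{F}_b$, $m\ge t$. Let $0=w^r_1\le\dots\le w^r_s$ (row reduction indices) and $0=w^c_1\le\dots\le w^c_s$ (column reduction indices), and let $\widetilde{C}_j^{(m)}$ be obtained from $C_j^{(m)}$ by setting its last $\min(m,w^r_j)$ rows and its last $\min(m,w^c_j)$ columns to zero. Let $\widetilde{t}$ be the minimal quality parameter of the digital net generated by $\widetilde{C}_1^{(m)},\dots,\widetilde{C}_s^{(m)}$. Then \[ \max\{0,\,m-\max\{w^c_s+t,\,w^r_s\}\}\le\rho_m\big(\widetilde{C}_1^{(m)},\dots,\widetilde{C}_s^{(m)}\big)\le\max\{0,\,m-\max\{w^c_s,w^r_s\}\}, \] and $\widetilde{t}\le\min\{m,\max\{w^c_s+t,\,w^r_s\}\}$.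
   Context: A $(t,m,s)$-net in base $b$ is a set of $b^m$ points in $[0,1)^s$ such that every elementary interval $\prod_j[a_jb^{-d_j},(a_j+1)b^{-d_j})$ of volume $b^{t-m}$ contains exactly $b^t$ points. Digital net generated by $C_1^{(m)},\dots,C_s^{(m)}\in\mathbb{F}_b^{m\times m}$: points $\boldsymbol{x}_k$, $0\le k<b^m$, with $x_{k,j}=(C_j^{(m)}\vec{k})\cdot(b^{-1},\dots,b^{-m})$, $\vec k$ the base-$b$ digit vector of $k$, arithmetic over $\mathbb{F}_b\cong\{0,\dots,b-1\}$; its minimal quality parameter is the least $t$ for which it is a $(t,m,s)$-net. A digital $(t,s)$-sequence over $\mathbb{F}_b$ is generated by infinite matrices $C_1,\dots,C_s$ over $\mathbb{F}_b$ (point $k$: $x_{k,j}=(C_j\vec k)\cdot(b^{-1},b^{-2},\dots)$) such that for every $m'\ge t$ and $k\ge0$ the points with indices $kb^{m'},\dots,kb^{m'}+b^{m'}-1$ form a $(t,m',s)$-net. The linear independence parameter $\rho_m(C_1^{(m)},\dots,C_s^{(m)})$ is the largest $d$ such that for all $d_1,\dots,d_s\in\mathbb{N}_0$ with $\sum d_j=d$ the first $d_j$ rows of $C_j^{(m)}$, $1\le j\le s$, are jointly linearly independent over $\mathbb{F}_b$. *)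

theory Defs
  imports Complex_Main "HOL-Computational_Algebra.Primes"
begin

text \<open>F_b (b prime) is represented by the naturals 0..b-1 with arithmetic mod b.
  Coordinates and row/column indices are 0-based: coordinate j in 0..s-1 corresponds to the
  paper's j+1; row i (resp. column l) of a matrix corresponds to the paper's i+1 (l+1).
  A (possibly infinite) family of matrices is C :: nat => nat => nat => nat, C j i l = entry
  (row i, column l) of the j-th matrix.\<close>

definition digit :: "nat \<Rightarrow> nat \<Rightarrow> nat \<Rightarrow> nat" where
  "digit b k l = (k div b ^ l) mod b"

definition net_coord :: "nat \<Rightarrow> nat \<Rightarrow> (nat \<Rightarrow> nat \<Rightarrow> nat \<Rightarrow> nat) \<Rightarrow> nat \<Rightarrow> nat \<Rightarrow> real" where
  "net_coord b m C j k =
     (\<Sum>i<m. real ((\<Sum>l<m. C j i l * digit b k l) mod b) / real b ^ (i + 1))"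

text \<open>Coordinate j of point k of the digital sequence generated by the infinite matrices C j.
  The digit vector of k vanishes from position k on, so the i-th entry of C_j k is a finite sum.\<close>
definition seq_coord :: "nat \<Rightarrow> (nat \<Rightarrow> nat \<Rightarrow> nat \<Rightarrow> nat) \<Rightarrow> nat \<Rightarrow> nat \<Rightarrow> real" where
  "seq_coord b C j k =
     (\<Sum>i. real ((\<Sum>l<k. C j i l * digit b k l) mod b) / real b ^ (i + 1))"

definition is_net :: "nat \<Rightarrow> nat \<Rightarrow> nat \<Rightarrow> nat \<Rightarrow> (nat \<Rightarrow> nat \<Rightarrow> real) \<Rightarrow> bool" where
  "is_net b t m s X \<longleftrightarrow> t \<le> m \<and>
     (\<forall>d a :: nat \<Rightarrow> nat. (\<Sum>j<s. d j) = m - t \<longrightarrow> (\<forall>j<s. a j < b ^ d j) \<longrightarrow>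
        card {k. k < b ^ m \<and> (\<forall>j<s. real (a j) / real b ^ d j \<le> X k j \<and>
                                       X k j < real (a j + 1) / real b ^ d j)} = b ^ t)"

definition is_digital_seq :: "nat \<Rightarrow> nat \<Rightarrow> nat \<Rightarrow> (nat \<Rightarrow> nat \<Rightarrow> nat \<Rightarrow> nat) \<Rightarrow> bool" where
  "is_digital_seq b t s C \<longleftrightarrow>
     (\<forall>j<s. \<forall>i l. C j i l < b) \<and>
     (\<forall>m'\<ge>t. \<forall>k. is_net b t m' s (\<lambda>i j. seq_coord b C j (k * b ^ m' + i)))"

definition min_quality :: "nat \<Rightarrow> nat \<Rightarrow> nat \<Rightarrow> (nat \<Rightarrow> nat \<Rightarrow> nat \<Rightarrow> nat) \<Rightarrow> nat" where
  "min_quality b m s C = (LEAST t. is_net b t m s (\<lambda>k j. net_coord b m C j k))"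

definition rows_lin_indep :: "nat \<Rightarrow> nat \<Rightarrow> nat \<Rightarrow> (nat \<Rightarrow> nat \<Rightarrow> nat \<Rightarrow> nat) \<Rightarrow> (nat \<Rightarrow> nat) \<Rightarrow> bool" where
  "rows_lin_indep b m s C dd \<longleftrightarrow> (\<forall>j<s. dd j \<le> m) \<and>
     (\<forall>c :: nat \<Rightarrow> nat \<Rightarrow> nat. (\<forall>j<s. \<forall>i<dd j. c j i < b) \<longrightarrow>
        (\<forall>l<m. (\<Sum>j<s. \<Sum>i<dd j. c j i * C j i l) mod b = 0) \<longrightarrow>
        (\<forall>j<s. \<forall>i<dd j. c j i = 0))"

definition lin_indep_param :: "nat \<Rightarrow> nat \<Rightarrow> nat \<Rightarrow> (nat \<Rightarrow> nat \<Rightarrow> nat \<Rightarrow> nat) \<Rightarrow> nat" where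
  "lin_indep_param b m s C =
     (GREATEST d. \<forall>dd :: nat \<Rightarrow> nat. (\<Sum>j<s. dd j) = d \<longrightarrow> rows_lin_indep b m s C dd)"

definition reduced :: "nat \<Rightarrow> (nat \<Rightarrow> nat) \<Rightarrow> (nat \<Rightarrow> nat) \<Rightarrow> (nat \<Rightarrow> nat \<Rightarrow> nat \<Rightarrow> nat)
                        \<Rightarrow> nat \<Rightarrow> nat \<Rightarrow> nat \<Rightarrow> nat" where
  "reduced m wr wc C j i l =
     (if i < m - min m (wr j) \<and> l < m - min m (wc j) then C j i l else 0)"

end

theory Submission
  imports Defs "HOL-Number_Theory.Cong" "HOL-Library.FuncSet"
begin


definition enc :: "nat \<Rightarrow> nat \<Rightarrow> (nat \<Rightarrow> nat) \<Rightarrow> nat" where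
  "enc b L e = (\<Sum>l<L. e l * b ^ l)"

lemma enc_Suc: "enc b (Suc L) e = enc b L e + e L * b ^ L"
  by (simp add: enc_def)

lemma enc_less:
  assumes "b \<ge> 2" "\<forall>l<L. e l < b"
  shows "enc b L e < b ^ L"
  using assms(2)
proof (induction L)
  case 0 then show ?case by (simp add: enc_def)
next
  case (Suc L)
  then have h: "enc b L e < b ^ L" and e: "e L \<le> b - 1" by auto
  have "enc b (Suc L) e < b^L + (b-1)*b^L"
    using h e by (simp add: enc_Suc add_less_le_mono mult_right_mono)
  also have "b^L + (b-1)*b^L = b ^ Suc L" using assms(1) by (cases b) auto
  finally show ?case .
qed

lemma digit_lt: "b > 0 \<Longrightarrow> digit b k l < b"
  by (simp add: digit_def)

lemma digit_add_high:
  assumes "b > 0" "x < b ^ L" "l < L"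
  shows "digit b (x + c * b ^ L) l = digit b x l"
proof -
  define q where "q = c * b * b ^ (L - Suc l)"
  have pw: "b ^ L = b ^ l * (b * b ^ (L - Suc l))"
  proof -
    have "b ^ L = b ^ (l + Suc (L - Suc l))" using assms(3) by simp
    then show ?thesis by (simp only: power_add power_Suc)
  qed
  have "c * b ^ L = c * (b ^ l * (b * b ^ (L - Suc l)))" by (simp only: pw)
  also have "\<dots> = q * b ^ l" by (simp only: q_def ac_simps)
  finally have e: "x + c * b ^ L = x + q * b ^ l" by simp
  have "(x + q * b ^ l) div b ^ l = q + x div b ^ l"
    using assms(1) by (intro div_mult_self1) simp
  then have "digit b (x + c * b ^ L) l = (q + x div b ^ l) mod b"
    unfolding digit_def e by simp
  also have "(q + x div b ^ l) mod b = (x div b ^ l + b * (c * b ^ (L - Suc l))) mod b"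
    by (simp add: q_def algebra_simps)
  also have "\<dots> = digit b x l" unfolding digit_def by (rule mod_mult_self2)
  finally show ?thesis .
qed

lemma digit_top:
  assumes "b > 0" "x < b ^ L" "c < b"
  shows "digit b (x + c * b ^ L) L = c"
proof -
  have "(x + c * b ^ L) div b ^ L = c + x div b ^ L"
    using assms(1) by (intro div_mult_self1) simp
  then show ?thesis using assms by (simp add: digit_def)
qed

lemma digit_enc:
  assumes "b \<ge> 2" "\<forall>l<L. e l < b" "l < L"
  shows "digit b (enc b L e) l = e l"
  using assms(2,3)
proof (induction L)
  case 0 then show ?case by simp
next
  case (Suc L)
  have h: "enc b L e < b ^ L" using enc_less[OF assms(1)] Suc.prems by auto
  show ?case
  proof (cases "l < L")
    case True
    then show ?thesis using Suc digit_add_high[OF _ h True] assms(1) by (simp add: enc_Suc)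
  next
    case False
    then have "l = L" using Suc.prems by simp
    then show ?thesis using digit_top[OF _ h] Suc.prems assms(1) by (simp add: enc_Suc)
  qed
qed

lemma enc_digit_mod:
  shows "enc b L (digit b k) = k mod b ^ L"
proof (induction L)
  case 0 then show ?case by (simp add: enc_def)
next
  case (Suc L)
  have "k mod b ^ Suc L = b ^ L * (k div b ^ L mod b) + k mod b ^ L"
    by (metis mod_mult2_eq power_Suc2)
  then show ?case using Suc by (simp add: enc_Suc digit_def)
qed

lemma enc_digit:
  assumes "k < b ^ L"
  shows "enc b L (digit b k) = k"
  using assms by (simp add: enc_digit_mod)

lemma digit_high:
  assumes "b > 0" "k < b ^ L" "L \<le> l"
  shows "digit b k l = 0"
proof -
  have "b ^ L \<le> b ^ l" using assms by (simp add: power_increasing)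
  then show ?thesis using assms by (simp add: digit_def)
qed


definition lin :: "nat \<Rightarrow> nat \<Rightarrow> ('x \<Rightarrow> nat \<Rightarrow> nat) \<Rightarrow> nat \<Rightarrow> 'x \<Rightarrow> nat" where
  "lin b L A k = (\<lambda>x. (\<Sum>l<L. A x l * digit b k l) mod b)"

lemma sum_mod_inner: "(\<Sum>l<L. A l * (f l mod b)) mod (b::nat) = (\<Sum>l<L. A l * f l) mod b"
proof -
  have "(\<Sum>l<L. A l * (f l mod b)) mod b = (\<Sum>l<L. (A l * (f l mod b)) mod b) mod b"
    by (simp add: mod_sum_eq)
  also have "\<dots> = (\<Sum>l<L. (A l * f l) mod b) mod b"
    by (simp add: mod_mult_right_eq)
  also have "\<dots> = (\<Sum>l<L. A l * f l) mod b" by (simp add: mod_sum_eq)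
  finally show ?thesis .
qed

lemma mod_add_cancel_lt:
  assumes "(x + c) mod b = (y + c) mod (b::nat)" "x < b" "y < b"
  shows "x = y"
proof -
  have "[x + c = y + c] (mod b)" using assms(1) by (simp add: cong_def)
  then have "[x = y] (mod b)" by (simp add: cong_add_rcancel_nat)
  then show ?thesis using assms(2,3) by (simp add: cong_def)
qed

lemma mod3: "(a + (c + d*e)) mod (b::nat) = (a mod b + (c mod b + d*(e mod b))) mod b"
proof -
  have "[a mod b + (c mod b + d*(e mod b)) = a + (c + d*e)] (mod b)"
    by (intro cong_add cong_mult cong_refl) (simp_all add: cong_def)
  then show ?thesis by (simp add: cong_def)
qed

definition shiftk :: "nat \<Rightarrow> nat \<Rightarrow> nat \<Rightarrow> nat \<Rightarrow> nat \<Rightarrow> nat" where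
  "shiftk b L k1 k2 k = enc b L (\<lambda>l. (digit b k l + (digit b k2 l + (b - 1) * digit b k1 l)) mod b)"

lemma lin_enc:
  assumes "b \<ge> 2" "\<forall>l<L. e l < b"
  shows "lin b L A (enc b L e) x = (\<Sum>l<L. A x l * e l) mod b"
  unfolding lin_def using digit_enc[OF assms] by (intro arg_cong[where f="\<lambda>z. z mod b"] sum.cong) auto

lemma lin_shiftk:
  assumes "b \<ge> 2"
  shows "lin b L A (shiftk b L k1 k2 k) x = (lin b L A k x + (lin b L A k2 x + (b - 1) * lin b L A k1 x)) mod b"
proof -
  have "lin b L A (shiftk b L k1 k2 k) x =
      (\<Sum>l<L. A x l * ((digit b k l + (digit b k2 l + (b - 1) * digit b k1 l)) mod b)) mod b"
    unfolding shiftk_def using assms by (intro lin_enc) auto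
  also have "\<dots> = (\<Sum>l<L. A x l * (digit b k l + (digit b k2 l + (b - 1) * digit b k1 l))) mod b"
    by (rule sum_mod_inner)
  also have "\<dots> = ((\<Sum>l<L. A x l * digit b k l) + ((\<Sum>l<L. A x l * digit b k2 l) + (b - 1) * (\<Sum>l<L. A x l * digit b k1 l))) mod b"
    by (simp add: sum.distrib sum_distrib_left algebra_simps)
  also have "\<dots> = (lin b L A k x + (lin b L A k2 x + (b - 1) * lin b L A k1 x)) mod b"
    unfolding lin_def by (rule mod3)
  finally show ?thesis .
qed

lemma lin_lt: "b > 0 \<Longrightarrow> lin b L A k x < b"
  by (simp add: lin_def)

lemma shiftk_lt: "b \<ge> 2 \<Longrightarrow> shiftk b L k1 k2 k < b ^ L"
  unfolding shiftk_def by (rule enc_less) auto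

lemma shiftk_inj:
  assumes "b \<ge> 2"
  shows "inj_on (shiftk b L k1 k2) {..<b ^ L}"
proof (rule inj_onI)
  fix k k' assume k: "k \<in> {..<b ^ L}" and k': "k' \<in> {..<b ^ L}" and eq: "shiftk b L k1 k2 k = shiftk b L k1 k2 k'"
  have "\<forall>l<L. digit b k l = digit b k' l"
  proof (intro allI impI)
    fix l assume l: "l < L"
    have "digit b (shiftk b L k1 k2 k) l = (digit b k l + (digit b k2 l + (b - 1) * digit b k1 l)) mod b"
      unfolding shiftk_def using assms l by (intro digit_enc) auto
    moreover have "digit b (shiftk b L k1 k2 k') l = (digit b k' l + (digit b k2 l + (b - 1) * digit b k1 l)) mod b"
      unfolding shiftk_def using assms l by (intro digit_enc) auto
    ultimately have "(digit b k l + (digit b k2 l + (b - 1) * digit b k1 l)) mod b =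
        (digit b k' l + (digit b k2 l + (b - 1) * digit b k1 l)) mod b" using eq by simp
    moreover have "digit b k l < b" "digit b k' l < b" using assms by (simp_all add: digit_lt)
    ultimately show "digit b k l = digit b k' l" by (rule mod_add_cancel_lt)
  qed
  then have "enc b L (digit b k) = enc b L (digit b k')" unfolding enc_def by simp
  then show "k = k'" using k k' by (simp add: enc_digit)
qed

lemma fiber_le:
  assumes "b \<ge> 2" "k1 < b ^ L" "k2 < b ^ L"
  shows "card {k. k < b ^ L \<and> lin b L A k = lin b L A k1} \<le> card {k. k < b ^ L \<and> lin b L A k = lin b L A k2}"
proof -
  let ?g = "shiftk b L k1 k2"
  have "?g ` {k. k < b ^ L \<and> lin b L A k = lin b L A k1} \<subseteq> {k. k < b ^ L \<and> lin b L A k = lin b L A k2}"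
  proof
    fix y assume "y \<in> ?g ` {k. k < b ^ L \<and> lin b L A k = lin b L A k1}"
    then obtain k where k: "k < b ^ L" "lin b L A k = lin b L A k1" and y: "y = ?g k" by auto
    have "lin b L A y = lin b L A k2"
    proof
      fix x
      have "lin b L A y x = (lin b L A k1 x + (lin b L A k2 x + (b - 1) * lin b L A k1 x)) mod b"
        using lin_shiftk[OF assms(1), of L A k1 k2 k x] y k(2) by simp
      also have "\<dots> = (lin b L A k2 x + b * lin b L A k1 x) mod b"
      proof -
        have "lin b L A k1 x + (b - 1) * lin b L A k1 x = b * lin b L A k1 x"
          using assms(1) by (simp add: diff_mult_distrib)
        then have "lin b L A k1 x + (lin b L A k2 x + (b - 1) * lin b L A k1 x) = lin b L A k2 x + b * lin b L A k1 x"
          by linarith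
        then show ?thesis by (rule arg_cong[where f="\<lambda>z. z mod b"])
      qed
      also have "\<dots> = lin b L A k2 x" using assms(1) lin_lt[of b L A k2 x] by simp
      finally show "lin b L A y x = lin b L A k2 x" .
    qed
    then show "y \<in> {k. k < b ^ L \<and> lin b L A k = lin b L A k2}" using y shiftk_lt[OF assms(1)] by simp
  qed
  moreover have "inj_on ?g {k. k < b ^ L \<and> lin b L A k = lin b L A k1}"
    by (rule inj_on_subset[OF shiftk_inj[OF assms(1)]]) auto
  ultimately show ?thesis
    by (intro card_inj_on_le) auto
qed

lemma fiber_eq:
  assumes "b \<ge> 2" "k1 < b ^ L" "k2 < b ^ L"
  shows "card {k. k < b ^ L \<and> lin b L A k = lin b L A k1} = card {k. k < b ^ L \<and> lin b L A k = lin b L A k2}"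
  by (rule antisym[OF fiber_le[OF assms] fiber_le[OF assms(1,3,2)]])


lemma double_sum_lt: "2 * (\<Sum>i<n. i) = n * (n - 1::nat)"
proof (induction n)
  case 0 then show ?case by simp
next
  case (Suc n)
  then have "2 * (\<Sum>i<Suc n. i) = n * (n - 1) + 2 * n" by simp
  also have "\<dots> = Suc n * (Suc n - 1)" by (cases n) auto
  finally show ?case .
qed

lemma fiber_card:
  fixes A :: "'x \<Rightarrow> nat \<Rightarrow> nat"
  assumes b: "b \<ge> 2" and fZ: "finite Z" and into: "\<forall>k<b ^ L. lin b L A k \<in> Z"
    and onto: "\<forall>z\<in>Z. \<exists>k<b ^ L. lin b L A k = z" and k1: "k1 < b ^ L"
  shows "b ^ L = card Z * card {k. k < b ^ L \<and> lin b L A k = lin b L A k1}"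
proof -
  let ?F = "\<lambda>z. {k. k < b ^ L \<and> lin b L A k = z}"
  have U: "{..<b ^ L} = (\<Union>z\<in>Z. ?F z)" using into by auto
  have "card {..<b ^ L} = (\<Sum>z\<in>Z. card (?F z))"
    unfolding U by (rule card_UN_disjoint) (use fZ in auto)
  also have "\<dots> = (\<Sum>z\<in>Z. card (?F (lin b L A k1)))"
  proof (rule sum.cong[OF refl])
    fix z assume "z \<in> Z"
    then obtain k where k: "k < b ^ L" "lin b L A k = z" using onto by auto
    show "card (?F z) = card (?F (lin b L A k1))"
      using fiber_eq[OF b k(1) k1, of A] k(2) by simp
  qed
  finally show ?thesis by simp
qed

lemma exists_inverse:
  assumes "prime (b::nat)" "0 < c" "c < b"
  shows "\<exists>x. (c * x) mod b = 1"
proof -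
  have "coprime c b"
    using assms by (metis coprime_commute prime_imp_coprime nat_dvd_not_less)
  then obtain x where "[c * x = Suc 0] (mod b)" using cong_solve_coprime_nat by blast
  moreover have "b > 1" using assms(1) prime_gt_1_nat by blast
  ultimately show ?thesis by (auto simp: cong_def)
qed

lemma functional_sum:
  assumes p: "prime b" and k0: "k0 < b ^ L" and nz: "(\<Sum>l<L. a l * digit b k0 l) mod b \<noteq> 0"
  shows "2 * (\<Sum>k<b ^ L. (\<Sum>l<L. a l * digit b k l) mod b) = b ^ L * (b - 1)"
proof -
  have b: "b \<ge> 2" using p prime_ge_2_nat by blast
  define A :: "unit \<Rightarrow> nat \<Rightarrow> nat" where "A = (\<lambda>_ l. a l)"
  define g where "g k = (\<Sum>l<L. a l * digit b k l) mod b" for k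
  have linA: "lin b L A k = (\<lambda>_. g k)" for k unfolding lin_def A_def g_def by simp
  define Z where "Z = (\<lambda>v. \<lambda>_::unit. v) ` {..<b}"
  have cZ: "card Z = b" unfolding Z_def by (subst card_image) (auto simp: inj_on_def fun_eq_iff)
  have surj: "\<exists>k<b ^ L. g k = v" if v: "v < b" for v
  proof -
    let ?c = "g k0"
    have c: "0 < ?c" "?c < b" using nz b by (auto simp: g_def)
    obtain x where x: "(?c * x) mod b = 1" using exists_inverse[OF p c] by blast
    define lam where "lam = x * v"
    define kv where "kv = enc b L (\<lambda>l. (lam * digit b k0 l) mod b)"
    have kv: "kv < b ^ L" unfolding kv_def using b by (intro enc_less) auto
    have "g kv = (\<Sum>l<L. a l * ((lam * digit b k0 l) mod b)) mod b"
      unfolding g_def kv_def using digit_enc[OF b, of L "\<lambda>l. (lam * digit b k0 l) mod b"] b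
      by (intro arg_cong[where f="\<lambda>z. z mod b"] sum.cong) auto
    also have "\<dots> = (\<Sum>l<L. a l * (lam * digit b k0 l)) mod b" by (rule sum_mod_inner)
    also have "\<dots> = (lam * (\<Sum>l<L. a l * digit b k0 l)) mod b"
      by (simp add: sum_distrib_left algebra_simps)
    also have "\<dots> = (lam * ?c) mod b" unfolding g_def by (simp add: mod_mult_right_eq)
    also have "\<dots> = (v * ((?c * x) mod b)) mod b" unfolding lam_def by (simp add: mod_mult_right_eq algebra_simps)
    also have "\<dots> = v" using x v by simp
    finally show ?thesis using kv by blast
  qed
  define F where "F = card {k. k < b ^ L \<and> lin b L A k = lin b L A k0}"
  have main: "b ^ L = card Z * F" unfolding F_def
  proof (rule fiber_card[OF b])
    show "finite Z" unfolding Z_def by simp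
    show "\<forall>k<b ^ L. lin b L A k \<in> Z" using b unfolding linA Z_def by (auto simp: g_def)
    show "\<forall>z\<in>Z. \<exists>k<b ^ L. lin b L A k = z" unfolding Z_def linA using surj by auto
  qed (rule k0)
  have fib: "card {k. k < b ^ L \<and> g k = v} = F" if vb: "v < b" for v
  proof -
    obtain kv where kv: "kv < b ^ L" "g kv = v" using surj[OF vb] by blast
    have "card {k. k < b ^ L \<and> g k = v} = card {k. k < b ^ L \<and> lin b L A k = lin b L A kv}"
      unfolding linA using kv(2) by (metis (no_types, lifting))
    also have "\<dots> = F" unfolding F_def by (rule fiber_eq[OF b kv(1) k0])
    finally show ?thesis .
  qed
  have img: "g ` {..<b ^ L} = {..<b}"
  proof
    show "g ` {..<b ^ L} \<subseteq> {..<b}" using b by (auto simp: g_def)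
    show "{..<b} \<subseteq> g ` {..<b ^ L}" using surj by force
  qed
  have "(\<Sum>k<b ^ L. g k) = (\<Sum>v\<in>g ` {..<b ^ L}. \<Sum>k\<in>{k. k \<in> {..<b ^ L} \<and> g k = v}. g k)"
    by (rule sum.image_gen) simp
  also have "\<dots> = (\<Sum>v<b. v * F)"
    unfolding img
  proof (rule sum.cong[OF refl])
    fix v assume "v \<in> {..<b}"
    then have "(\<Sum>k\<in>{k. k \<in> {..<b ^ L} \<and> g k = v}. g k) = (\<Sum>k\<in>{k. k < b ^ L \<and> g k = v}. v)"
      by (intro sum.cong) auto
    also have "\<dots> = v * F" using fib[of v] \<open>v \<in> {..<b}\<close> by simp
    finally show "(\<Sum>k\<in>{k. k \<in> {..<b ^ L} \<and> g k = v}. g k) = v * F" .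
  qed
  finally have "2 * (\<Sum>k<b ^ L. g k) = F * (2 * (\<Sum>v<b. v))" by (simp add: sum_distrib_right[symmetric] algebra_simps)
  also have "\<dots> = F * (b * (b - 1))" by (simp add: double_sum_lt)
  also have "\<dots> = b ^ L * (b - 1)" using main cZ by simp
  finally show ?thesis unfolding g_def .
qed


definition dval :: "nat \<Rightarrow> (nat \<Rightarrow> nat) \<Rightarrow> real" where
  "dval b y = (\<Sum>i. real (y i) / real b ^ (i+1))"

lemma geo_full:
  assumes "b \<ge> (2::nat)"
  shows "(\<lambda>i. real (b - 1) / real b ^ (i+1)) sums 1"
proof -
  have c: "norm (1 / real b) < 1" using assms by simp
  have "(\<lambda>i. (real (b-1) / real b) * (1 / real b) ^ i) sums ((real (b-1) / real b) * (1 / (1 - 1 / real b)))"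
    by (rule sums_mult[OF geometric_sums[OF c]])
  moreover have "(real (b-1) / real b) * (1 / (1 - 1 / real b)) = 1"
    using assms by (simp add: field_simps of_nat_diff)
  moreover have "(\<lambda>i. (real (b-1) / real b) * (1 / real b) ^ i) = (\<lambda>i. real (b - 1) / real b ^ (i+1))"
    by (rule ext) (simp add: field_simps power_divide)
  ultimately show ?thesis by metis
qed

lemma dval_summable:
  assumes "b \<ge> (2::nat)" "\<forall>i. y i < b"
  shows "summable (\<lambda>i. real (y i) / real b ^ (i+1))"
proof (rule summable_comparison_test'[OF sums_summable[OF geo_full[OF assms(1)]]])
  fix i
  have "y i < b" using assms(2) by simp
  then have "y i \<le> b - 1" by simp
  then show "norm (real (y i) / real b ^ (i+1)) \<le> real (b - 1) / real b ^ (i+1)"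
    using assms(1) by (simp add: divide_right_mono)
qed

lemma dval_nonneg:
  assumes "b \<ge> (2::nat)" "\<forall>i. y i < b"
  shows "0 \<le> dval b y"
  unfolding dval_def by (intro suminf_nonneg dval_summable assms) simp

lemma dval_le1:
  assumes "b \<ge> (2::nat)" "\<forall>i. y i < b"
  shows "dval b y \<le> 1"
proof -
  have "dval b y \<le> (\<Sum>i. real (b - 1) / real b ^ (i+1))"
    unfolding dval_def
  proof (rule suminf_le[OF _ dval_summable[OF assms] sums_summable[OF geo_full[OF assms(1)]]])
    fix i
    have "y i < b" using assms(2) by simp
    then have "y i \<le> b - 1" by simp
    then show "real (y i) / real b ^ (i+1) \<le> real (b - 1) / real b ^ (i+1)"
      by (simp add: divide_right_mono)
  qed
  also have "\<dots> = 1" using sums_unique[OF geo_full[OF assms(1)]] by simp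
  finally show ?thesis .
qed

lemma dval_lt1:
  assumes "b \<ge> (2::nat)" "\<forall>i. y i < b" "y i0 \<noteq> b - 1"
  shows "dval b y < 1"
proof -
  let ?g = "\<lambda>i. real (b - 1) / real b ^ (i+1)"
  let ?f = "\<lambda>i. real (y i) / real b ^ (i+1)"
  have sg: "summable ?g" by (rule sums_summable[OF geo_full[OF assms(1)]])
  have sf: "summable ?f" by (rule dval_summable[OF assms(1,2)])
  have "0 < (\<Sum>i. ?g i - ?f i)"
  proof (subst suminf_pos_iff)
    show "summable (\<lambda>i. ?g i - ?f i)" using sg sf by (rule summable_diff)
    fix n
    have "y n < b" using assms(2) by simp
    then have "y n \<le> b - 1" by simp
    then show "0 \<le> ?g n - ?f n" by (simp add: divide_right_mono)
  next
    have "y i0 < b" using assms(2) by simp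
    then have "y i0 < b - 1" using assms(3) by simp
    then have "real (y i0) < real (b - 1)" by simp
    then have "?f i0 < ?g i0" using assms(1) by (simp add: divide_strict_right_mono)
    then show "\<exists>i. 0 < ?g i - ?f i" by auto
  qed
  also have "\<dots> = suminf ?g - suminf ?f" using suminf_diff[OF sg sf] by simp
  also have "\<dots> = 1 - dval b y" using sums_unique[OF geo_full[OF assms(1)]] by (simp add: dval_def)
  finally show ?thesis by simp
qed

lemma dval_eq1:
  assumes "b \<ge> (2::nat)" "\<forall>i. y i = b - 1"
  shows "dval b y = 1"
  using sums_unique[OF geo_full[OF assms(1)]] assms(2) by (simp add: dval_def)

lemma dval_shift:
  assumes "b \<ge> (2::nat)" "\<forall>i. y i < b"
  shows "real b ^ d * dval b y = real (\<Sum>i<d. y i * b ^ (d - 1 - i)) + dval b (\<lambda>i. y (i + d))"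
proof -
  let ?f = "\<lambda>i. real (y i) / real b ^ (i+1)"
  have sf: "summable ?f" by (rule dval_summable[OF assms(1,2)])
  have "dval b y = (\<Sum>i. ?f (i + d)) + (\<Sum>i<d. ?f i)"
    unfolding dval_def by (rule suminf_split_initial_segment[OF sf])
  then have "real b ^ d * dval b y = real b ^ d * (\<Sum>i. ?f (i + d)) + (\<Sum>i<d. real b ^ d * ?f i)"
    by (simp add: distrib_left sum_distrib_left)
  also have "real b ^ d * (\<Sum>i. ?f (i + d)) = (\<Sum>i. real b ^ d * ?f (i + d))"
    by (rule suminf_mult[symmetric]) (rule summable_ignore_initial_segment[OF sf])
  also have "(\<Sum>i. real b ^ d * ?f (i + d)) = dval b (\<lambda>i. y (i + d))"
    unfolding dval_def
  proof (rule suminf_cong)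
    fix i
    have "real b ^ (i + d + 1) = real b ^ d * real b ^ (i+1)" by (simp add: power_add)
    then show "real b ^ d * ?f (i + d) = real (y (i + d)) / real b ^ (i+1)"
      using assms(1) by simp
  qed
  also have "(\<Sum>i<d. real b ^ d * ?f i) = real (\<Sum>i<d. y i * b ^ (d - 1 - i))"
    unfolding of_nat_sum
  proof (rule sum.cong[OF refl])
    fix i assume "i \<in> {..<d}"
    then have "d = (d - 1 - i) + (i + 1)" by simp
    then have "real b ^ d = real b ^ (d - 1 - i) * real b ^ (i+1)" by (metis power_add)
    then show "real b ^ d * ?f i = real (y i * b ^ (d - 1 - i))"
      using assms(1) by simp
  qed
  finally show ?thesis by simp
qed

lemma floor_dval:
  assumes "b \<ge> (2::nat)" "\<forall>i. y i < b"
  shows "\<lfloor>real b ^ d * dval b y\<rfloor> =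
           int (\<Sum>i<d. y i * b ^ (d - 1 - i)) + (if \<forall>i\<ge>d. y i = b - 1 then 1 else 0)"
proof -
  let ?z = "\<lambda>i. y (i + d)"
  define P where "P = (\<Sum>i<d. y i * b ^ (d - 1 - i))"
  have z: "\<forall>i. ?z i < b" using assms(2) by simp
  have e: "real b ^ d * dval b y = real P + dval b ?z"
    unfolding P_def by (rule dval_shift[OF assms])
  show ?thesis
  proof (cases "\<forall>i\<ge>d. y i = b - 1")
    case True
    then have "\<forall>i. ?z i = b - 1" by simp
    then have "dval b ?z = 1" by (rule dval_eq1[OF assms(1)])
    then have "real b ^ d * dval b y = real (P + 1)" using e by simp
    then have "\<lfloor>real b ^ d * dval b y\<rfloor> = int (P + 1)" by (simp only: floor_of_nat)
    then show ?thesis using True by (simp add: P_def)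
  next
    case False
    then obtain i where "i \<ge> d" "y i \<noteq> b - 1" by auto
    then have "?z (i - d) \<noteq> b - 1" by simp
    then have "dval b ?z < 1" by (rule dval_lt1[OF assms(1) z])
    moreover have "0 \<le> dval b ?z" by (rule dval_nonneg[OF assms(1) z])
    ultimately have "\<lfloor>real b ^ d * dval b y\<rfloor> = int P" using e by (simp add: floor_eq_iff)
    then show ?thesis using False by (simp add: P_def)
  qed
qed

lemma interval_iff_floor:
  assumes "b \<ge> (2::nat)" "0 \<le> x"
  shows "(real a / real b ^ d \<le> x \<and> x < real (a + 1) / real b ^ d) \<longleftrightarrow> \<lfloor>real b ^ d * x\<rfloor> = int a"
proof -
  have p: "real b ^ d > 0" using assms(1) by simp
  have "(real a / real b ^ d \<le> x \<and> x < real (a + 1) / real b ^ d) \<longleftrightarrow>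
        (real a \<le> real b ^ d * x \<and> real b ^ d * x < real a + 1)"
    using p by (simp add: divide_le_eq less_divide_eq ac_simps)
  also have "\<dots> \<longleftrightarrow> \<lfloor>real b ^ d * x\<rfloor> = int a" by (simp add: floor_eq_iff)
  finally show ?thesis .
qed


definition Yd :: "nat \<Rightarrow> (nat \<Rightarrow> nat \<Rightarrow> nat \<Rightarrow> nat) \<Rightarrow> nat \<Rightarrow> nat \<Rightarrow> nat \<Rightarrow> nat" where
  "Yd b C j i k = (\<Sum>l<k. C j i l * digit b k l) mod b"

lemma seq_coord_dval: "seq_coord b C j k = dval b (\<lambda>i. Yd b C j i k)"
  unfolding seq_coord_def dval_def Yd_def by simp

lemma Yd_lt: "b > 0 \<Longrightarrow> Yd b C j i k < b"
  by (simp add: Yd_def)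

lemma k_lt_pow: "b \<ge> (2::nat) \<Longrightarrow> k < b ^ k"
proof -
  assume "b \<ge> 2"
  then have "2 ^ k \<le> b ^ k" by (simp add: power_mono)
  moreover have "k < 2 ^ k" by (rule less_exp)
  ultimately show ?thesis by linarith
qed

lemma Yd_L:
  assumes b: "b \<ge> 2" and k: "k < b ^ L"
  shows "Yd b C j i k = (\<Sum>l<L. C j i l * digit b k l) mod b"
proof -
  have h1: "digit b k l = 0" if "l \<ge> k" for l
    using digit_high[of b k k l] b k_lt_pow[OF b] that by simp
  have h2: "digit b k l = 0" if "l \<ge> L" for l
    using digit_high[of b k L l] b k that by simp
  have "(\<Sum>l<k + L. C j i l * digit b k l) = (\<Sum>l<k. C j i l * digit b k l)"
  proof (rule sum.mono_neutral_right)
    show "\<forall>l\<in>{..<k + L} - {..<k}. C j i l * digit b k l = 0"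
      using h1 by auto
  qed auto
  moreover have "(\<Sum>l<k + L. C j i l * digit b k l) = (\<Sum>l<L. C j i l * digit b k l)"
  proof (rule sum.mono_neutral_right)
    show "\<forall>l\<in>{..<k + L} - {..<L}. C j i l * digit b k l = 0"
      using h2 by auto
  qed auto
  ultimately show ?thesis unfolding Yd_def by simp
qed

definition renc :: "nat \<Rightarrow> nat \<Rightarrow> (nat \<Rightarrow> nat) \<Rightarrow> nat" where
  "renc b d y = (\<Sum>i<d. y i * b ^ (d - 1 - i))"

lemma renc_enc: "renc b d y = enc b d (\<lambda>l. y (d - 1 - l))"
proof -
  have "enc b d (\<lambda>l. y (d - 1 - l)) = (\<Sum>l<d. (\<lambda>i. y i * b ^ (d - 1 - i)) (d - Suc l))"
    unfolding enc_def by (intro sum.cong) (auto simp: Suc_diff_Suc)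
  also have "\<dots> = renc b d y" unfolding renc_def by (rule sum.nat_diff_reindex)
  finally show ?thesis by simp
qed

lemma renc_lt: "b \<ge> 2 \<Longrightarrow> \<forall>i<d. y i < b \<Longrightarrow> renc b d y < b ^ d"
  unfolding renc_enc by (rule enc_less) auto

lemma renc_inj:
  assumes b: "b \<ge> 2" and y: "\<forall>i<d. y i < b" and z: "\<forall>i<d. z i < b"
    and eq: "renc b d y = renc b d z" and i: "i < d"
  shows "y i = z i"
proof -
  have "digit b (renc b d y) (d - 1 - i) = y i"
    unfolding renc_enc using i y by (subst digit_enc[OF b]) auto
  moreover have "digit b (renc b d z) (d - 1 - i) = z i"
    unfolding renc_enc using i z by (subst digit_enc[OF b]) auto
  ultimately show ?thesis using eq by simp
qed

lemma geom_nat: "(b - 1) * (\<Sum>i<q. b ^ i) + 1 = (b::nat) ^ q" if "b \<ge> 1"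
proof (induction q)
  case 0 then show ?case by simp
next
  case (Suc q)
  have "(b - 1) * (\<Sum>i<Suc q. b ^ i) + 1 = ((b - 1) * (\<Sum>i<q. b ^ i) + 1) + (b - 1) * b ^ q"
    by (simp add: algebra_simps)
  also have "\<dots> = b ^ q + (b - 1) * b ^ q" using Suc by simp
  also have "\<dots> = b ^ Suc q" using that by (cases b) auto
  finally show ?case .
qed

lemma geom_rev: "(b - 1) * (\<Sum>i<q. b ^ (q - 1 - i)) + 1 = (b::nat) ^ q" if "b \<ge> 1"
proof -
  have "(\<Sum>i<q. b ^ (q - 1 - i)) = (\<Sum>i<q. (\<lambda>i. b ^ i) (q - Suc i))" by simp
  also have "\<dots> = (\<Sum>i<q. b ^ i)" by (rule sum.nat_diff_reindex)
  finally show ?thesis using geom_nat[OF that] by simp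
qed


lemma seq_net0:
  assumes "is_digital_seq b t s C" "t \<le> L"
  shows "is_net b t L s (\<lambda>i j. seq_coord b C j i)"
proof -
  have "is_net b t L s (\<lambda>i j. seq_coord b C j (0 * b ^ L + i))"
    using assms unfolding is_digital_seq_def by blast
  then show ?thesis by simp
qed

lemma no_trailing:
  assumes p: "prime b" and ds: "is_digital_seq b t s C" and j: "j < s"
  shows "\<exists>i\<ge>p. Yd b C j i n \<noteq> b - 1"
proof (rule ccontr)
  assume "\<not> ?thesis"
  then have tr: "\<forall>i\<ge>p. Yd b C j i n = b - 1" by auto
  have b: "b \<ge> 2" using p prime_ge_2_nat by blast
  define L where "L = n + t + p + 1"
  define q where "q = L - t"
  have Lq: "L = q + t" and qp: "q \<ge> p + 1" unfolding q_def L_def by auto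
  have nL: "n < b ^ L"
  proof -
    have "n < b ^ n" by (rule k_lt_pow[OF b])
    also have "\<dots> \<le> b ^ L" using b unfolding L_def by (intro power_increasing) auto
    finally show ?thesis .
  qed
  have net: "is_net b t L s (\<lambda>i j. seq_coord b C j i)" by (rule seq_net0[OF ds]) (simp add: L_def)
  define x where "x k j' = seq_coord b C j' k" for k j'
  define dd :: "nat \<Rightarrow> nat" where "dd j' = (if j' = j then q else 0)" for j'
  define aa :: "nat \<Rightarrow> nat \<Rightarrow> nat" where "aa a j' = (if j' = j then a else 0)" for a j'
  define G where "G a = {k. k < b ^ L \<and> (\<forall>j'<s. real (aa a j') / real b ^ dd j' \<le> x k j' \<and> x k j' < real (aa a j' + 1) / real b ^ dd j')}" for a
  define idx where "idx k = nat \<lfloor>real b ^ q * x k j\<rfloor>" for k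
  have sumdd: "(\<Sum>j'<s. dd j') = L - t" unfolding dd_def q_def using j by simp
  have cardG: "card (G a) = b ^ t" if "a < b ^ q" for a
  proof -
    have "\<forall>j'<s. aa a j' < b ^ dd j'" using that b unfolding aa_def dd_def by auto
    then show ?thesis using net sumdd unfolding is_net_def G_def x_def by blast
  qed
  have xnn: "0 \<le> x k j'" for k j'
    unfolding x_def seq_coord_dval using b by (intro dval_nonneg) (auto simp: Yd_lt)
  have Gidx: "idx k = a" if "k \<in> G a" for k a
  proof -
    have "real (aa a j) / real b ^ dd j \<le> x k j \<and> x k j < real (aa a j + 1) / real b ^ dd j"
      using that j unfolding G_def by blast
    then have "real a / real b ^ q \<le> x k j \<and> x k j < real (a + 1) / real b ^ q"
      unfolding aa_def dd_def by simp
    then have "\<lfloor>real b ^ q * x k j\<rfloor> = int a" using interval_iff_floor[OF b xnn] by blast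
    then show ?thesis unfolding idx_def by simp
  qed
  have GD: "G a \<subseteq> {..<b ^ L}" for a unfolding G_def by auto
  have finG: "finite (G a)" for a using GD finite_subset by blast
  have cU: "card (\<Union>a\<in>{..<b ^ q}. G a) = b ^ L"
  proof -
    have "card (\<Union>a\<in>{..<b ^ q}. G a) = (\<Sum>a<b ^ q. card (G a))"
    proof (rule card_UN_disjoint)
      show "\<forall>i\<in>{..<b ^ q}. \<forall>j\<in>{..<b ^ q}. i \<noteq> j \<longrightarrow> G i \<inter> G j = {}"
        using Gidx by blast
    qed (auto simp: finG)
    also have "\<dots> = b ^ q * b ^ t" using cardG by simp
    finally show ?thesis unfolding Lq by (simp add: power_add)
  qed
  have UD: "(\<Union>a\<in>{..<b ^ q}. G a) = {..<b ^ L}"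
    by (rule card_subset_eq) (use GD cU in auto)
  have Geq: "G a = {k. k < b ^ L \<and> idx k = a}" if "a < b ^ q" for a
  proof
    show "G a \<subseteq> {k. k < b ^ L \<and> idx k = a}" using GD Gidx by blast
    show "{k. k < b ^ L \<and> idx k = a} \<subseteq> G a"
    proof
      fix k assume "k \<in> {k. k < b ^ L \<and> idx k = a}"
      then have k: "k < b ^ L" "idx k = a" by auto
      then obtain a' where "a' < b ^ q" "k \<in> G a'" using UD by blast
      then show "k \<in> G a" using Gidx k by metis
    qed
  qed
  have idx_lt: "idx k < b ^ q" if "k < b ^ L" for k
    using that UD Gidx by (metis UN_iff lessThan_iff)
  have img: "idx ` {..<b ^ L} = {..<b ^ q}"
  proof
    show "idx ` {..<b ^ L} \<subseteq> {..<b ^ q}" using idx_lt by auto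
    show "{..<b ^ q} \<subseteq> idx ` {..<b ^ L}"
    proof
      fix a assume a: "a \<in> {..<b ^ q}"
      then have "card (G a) > 0" using cardG b by simp
      then obtain k where "k \<in> G a" by (metis card_gt_0_iff ex_in_conv)
      then show "a \<in> idx ` {..<b ^ L}" using GD Gidx by blast
    qed
  qed
  have sum_idx: "2 * (\<Sum>k<b ^ L. idx k) = b ^ L * (b ^ q - 1)"
  proof -
    have "(\<Sum>k<b ^ L. idx k) = (\<Sum>a\<in>idx ` {..<b ^ L}. \<Sum>k\<in>{k. k \<in> {..<b ^ L} \<and> idx k = a}. idx k)"
      by (rule sum.image_gen) simp
    also have "\<dots> = (\<Sum>a<b ^ q. a * b ^ t)"
      unfolding img
    proof (rule sum.cong[OF refl])
      fix a assume a: "a \<in> {..<b ^ q}"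
      have "(\<Sum>k\<in>{k. k \<in> {..<b ^ L} \<and> idx k = a}. idx k) = (\<Sum>k\<in>G a. a)"
        using Geq[of a] a by (intro sum.cong) auto
      also have "\<dots> = a * b ^ t" using cardG[of a] a by simp
      finally show "(\<Sum>k\<in>{k. k \<in> {..<b ^ L} \<and> idx k = a}. idx k) = a * b ^ t" .
    qed
    finally have "2 * (\<Sum>k<b ^ L. idx k) = b ^ t * (2 * (\<Sum>a<b ^ q. a))"
      by (simp add: sum_distrib_right[symmetric] algebra_simps)
    also have "\<dots> = b ^ t * (b ^ q * (b ^ q - 1))" by (simp add: double_sum_lt)
    finally show ?thesis unfolding Lq by (simp add: power_add algebra_simps)
  qed
  have yl: "\<forall>i. Yd b C j i k < b" for k using b by (simp add: Yd_lt)
  define T where "T = {k. k < b ^ L \<and> (\<forall>i\<ge>q. Yd b C j i k = b - 1)}"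
  define pi where "pi k = (\<Sum>i<q. Yd b C j i k * b ^ (q - 1 - i))" for k
  have idx_eq: "idx k = pi k + (if \<forall>i\<ge>q. Yd b C j i k = b - 1 then 1 else 0)" for k
  proof -
    have "\<lfloor>real b ^ q * x k j\<rfloor> = int (pi k) + (if \<forall>i\<ge>q. Yd b C j i k = b - 1 then 1 else 0)"
      unfolding x_def seq_coord_dval pi_def by (rule floor_dval[OF b yl])
    then show ?thesis unfolding idx_def
      by (cases "\<forall>i\<ge>q. Yd b C j i k = b - 1") (simp_all add: nat_add_distrib)
  qed
  have sum_split: "(\<Sum>k<b ^ L. idx k) = (\<Sum>k<b ^ L. pi k) + card T"
  proof -
    have "(\<Sum>k<b ^ L. idx k) = (\<Sum>k<b ^ L. pi k) + (\<Sum>k<b ^ L. if \<forall>i\<ge>q. Yd b C j i k = b - 1 then 1 else 0)"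
      unfolding idx_eq by (rule sum.distrib)
    also have "(\<Sum>k<b ^ L. if \<forall>i\<ge>q. Yd b C j i k = b - 1 then 1 else (0::nat)) = card T"
    proof -
      have "(\<Sum>k<b ^ L. if \<forall>i\<ge>q. Yd b C j i k = b - 1 then 1 else (0::nat)) =
            (\<Sum>k\<in>{k \<in> {..<b ^ L}. \<forall>i\<ge>q. Yd b C j i k = b - 1}. 1)"
        by (rule sum.inter_filter[symmetric]) simp
      also have "\<dots> = card T" unfolding T_def by simp
      finally show ?thesis .
    qed
    finally show ?thesis .
  qed
  define Z where "Z = {i. i < q \<and> (\<forall>k<b ^ L. Yd b C j i k = 0)}"
  have sig: "2 * (\<Sum>k<b ^ L. Yd b C j i k) = (if i \<in> Z then 0 else b ^ L * (b - 1))" if iq: "i < q" for i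
  proof (cases "i \<in> Z")
    case True
    then show ?thesis unfolding Z_def by simp
  next
    case False
    then obtain k0 where k0: "k0 < b ^ L" "Yd b C j i k0 \<noteq> 0" using iq unfolding Z_def by auto
    have "2 * (\<Sum>k<b ^ L. (\<Sum>l<L. C j i l * digit b k l) mod b) = b ^ L * (b - 1)"
      using k0 Yd_L[OF b k0(1)] by (intro functional_sum[OF p k0(1)]) simp
    moreover have "(\<Sum>k<b ^ L. Yd b C j i k) = (\<Sum>k<b ^ L. (\<Sum>l<L. C j i l * digit b k l) mod b)"
      using Yd_L[OF b] by (intro sum.cong) auto
    ultimately show ?thesis using False by simp
  qed
  have sum_pi: "2 * (\<Sum>k<b ^ L. pi k) = (\<Sum>i<q. if i \<in> Z then 0 else b ^ L * (b - 1) * b ^ (q - 1 - i))"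
  proof -
    have "2 * (\<Sum>k<b ^ L. pi k) = (\<Sum>i<q. b ^ (q - 1 - i) * (2 * (\<Sum>k<b ^ L. Yd b C j i k)))"
      unfolding pi_def by (simp add: sum_distrib_left sum_distrib_right sum.swap[of _ "{..<q}"] algebra_simps)
    also have "\<dots> = (\<Sum>i<q. if i \<in> Z then 0 else b ^ L * (b - 1) * b ^ (q - 1 - i))"
      by (intro sum.cong) (auto simp: sig)
    finally show ?thesis .
  qed
  define S where "S = (\<Sum>i<q. if i \<in> Z then b ^ (q - 1 - i) else 0)"
  define S' where "S' = (\<Sum>i<q. if i \<in> Z then 0 else b ^ (q - 1 - i))"
  define X where "X = b ^ L * (b - 1)"
  have pi2: "2 * (\<Sum>k<b ^ L. pi k) = X * S'"
    unfolding sum_pi X_def S'_def by (simp add: sum_distrib_left if_distrib cong: if_cong)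
  have RS: "S' + S = (\<Sum>i<q. b ^ (q - 1 - i))"
    unfolding S_def S'_def by (simp add: sum.distrib[symmetric] if_distrib) (intro sum.cong, auto)
  have "b ^ q - 1 = (b - 1) * (\<Sum>i<q. b ^ (q - 1 - i))" using geom_rev[of b q] b by simp
  then have "2 * (\<Sum>k<b ^ L. idx k) = X * (S' + S)" unfolding sum_idx X_def RS by (simp add: algebra_simps)
  then have cT: "2 * card T = X * S" using pi2 sum_split by (simp add: algebra_simps)
  have nT: "n \<in> T" unfolding T_def using nL tr qp by auto
  have zT: "0 \<notin> T" unfolding T_def Yd_def using b by auto
  have T1: "card T \<ge> 1"
  proof -
    have "finite T" unfolding T_def by simp
    then show ?thesis using nT by (metis One_nat_def Suc_leI card_gt_0_iff empty_iff)
  qed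
  have T2: "card T < b ^ L"
  proof -
    have "T \<subseteq> {1..<b ^ L}"
    proof
      fix k assume k: "k \<in> T"
      then have "k \<noteq> 0" using zT by metis
      moreover have "k < b ^ L" using k unfolding T_def by simp
      ultimately show "k \<in> {1..<b ^ L}" by simp
    qed
    then have "card T \<le> b ^ L - 1" by (metis card_atLeastLessThan card_mono finite_atLeastLessThan)
    moreover have "b ^ L \<ge> 1" using b by simp
    ultimately show ?thesis by linarith
  qed
  have "S \<noteq> 0"
  proof
    assume "S = 0"
    then have "card T = 0" using cT by simp
    then show False using T1 by simp
  qed
  have "\<exists>i<q. i \<in> Z"
  proof (rule ccontr)
    assume "\<not> (\<exists>i<q. i \<in> Z)"
    then have "S = 0" unfolding S_def by (intro sum.neutral) auto
    then show False using \<open>S \<noteq> 0\<close> by simp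
  qed
  then obtain i where iZ: "i < q" "i \<in> Z" by blast
  have "i \<noteq> q - 1"
  proof
    assume "i = q - 1"
    then have "Yd b C j i n = b - 1" using tr qp by simp
    moreover have "Yd b C j i n = 0" using iZ nL unfolding Z_def by simp
    ultimately show False using b by simp
  qed
  then have "q - 1 - i \<ge> 1" using iZ by simp
  then have "b ^ (q - 1 - i) \<ge> b ^ 1" using b by (intro power_increasing) auto
  moreover have "b ^ (q - 1 - i) \<le> S"
  proof -
    have "(if i \<in> Z then b ^ (q - 1 - i) else 0) \<le> S"
      unfolding S_def using iZ by (intro member_le_sum) auto
    then show ?thesis using iZ by simp
  qed
  ultimately have Sb: "S \<ge> b" by simp
  have "X * S \<ge> b ^ L * ((b - 1) * b)" unfolding X_def using Sb by (simp add: mult.assoc)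
  moreover have "(b - 1) * b \<ge> 2" using b by (metis diff_le_mono mult_le_mono numeral_le_one_iff one_plus_numeral one_le_numeral semiring_norm(5) nat_1_add_1 one_add_one add_diff_cancel_left' mult_2_right)
  ultimately have "X * S \<ge> b ^ L * 2" by (meson le_trans mult_le_mono2)
  then show False using cT T2 by linarith
qed


lemma seq_surj:
  assumes p: "prime b" and ds: "is_digital_seq b t s C" and tM: "t \<le> M"
    and sd: "(\<Sum>j<s. dd j) \<le> M - t" and z: "\<forall>j<s. \<forall>i<dd j. z j i < b"
  shows "\<exists>k<b ^ M. \<forall>j<s. \<forall>i<dd j. (\<Sum>l<M. C j i l * digit b k l) mod b = z j i"
proof (cases "s = 0")
  case True
  have "0 < b ^ M" using p prime_gt_0_nat by simp
  then show ?thesis using True by blast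
next
  case False
  have b: "b \<ge> 2" using p prime_ge_2_nat by blast
  define dd' where "dd' j = dd j + (if j = 0 then M - t - (\<Sum>j<s. dd j) else 0)" for j
  define z' where "z' j i = (if i < dd j then z j i else 0)" for j i
  define a where "a j = renc b (dd' j) (z' j)" for j
  have sdd': "(\<Sum>j<s. dd' j) = M - t"
    unfolding dd'_def using False sd by (simp add: sum.distrib)
  have z'b: "\<forall>i. z' j i < b" if "j < s" for j using z that b unfolding z'_def by auto
  have alt: "\<forall>j<s. a j < b ^ dd' j" unfolding a_def using z'b b by (auto intro: renc_lt)
  have net: "is_net b t M s (\<lambda>i j. seq_coord b C j i)" by (rule seq_net0[OF ds tM])
  let ?G = "{k. k < b ^ M \<and> (\<forall>j<s. real (a j) / real b ^ dd' j \<le> seq_coord b C j k \<and> seq_coord b C j k < real (a j + 1) / real b ^ dd' j)}"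
  have cG: "card ?G = b ^ t" by (rule net[unfolded is_net_def, THEN conjunct2, rule_format, OF sdd' alt[rule_format]])
  have "?G \<noteq> {}"
  proof
    assume "?G = {}"
    then have "card ?G = card ({}::nat set)" by (rule arg_cong)
    then have "card ?G = 0" by (simp only: card.empty)
    then have "b ^ t = 0" using cG by linarith
    then show False using b by simp
  qed
  then obtain k where k: "k \<in> ?G" by blast
  have kM: "k < b ^ M" using k by simp
  have "\<forall>j<s. \<forall>i<dd j. Yd b C j i k = z j i"
  proof (intro allI impI)
    fix j i assume j: "j < s" and i: "i < dd j"
    have yl: "\<forall>i. Yd b C j i k < b" using b by (simp add: Yd_lt)
    have xnn: "0 \<le> seq_coord b C j k" unfolding seq_coord_dval using b yl by (intro dval_nonneg) auto
    have "real (a j) / real b ^ dd' j \<le> seq_coord b C j k \<and> seq_coord b C j k < real (a j + 1) / real b ^ dd' j"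
      using k j by blast
    then have fl: "\<lfloor>real b ^ dd' j * seq_coord b C j k\<rfloor> = int (a j)"
      using interval_iff_floor[OF b xnn] by blast
    obtain i0 where i0: "i0 \<ge> dd' j" "Yd b C j i0 k \<noteq> b - 1" using no_trailing[OF p ds j] by blast
    have "\<lfloor>real b ^ dd' j * seq_coord b C j k\<rfloor> = int (renc b (dd' j) (\<lambda>i. Yd b C j i k))"
      unfolding seq_coord_dval renc_def using floor_dval[OF b yl, of "dd' j"] i0 by auto
    then have "renc b (dd' j) (\<lambda>i. Yd b C j i k) = renc b (dd' j) (z' j)"
      using fl unfolding a_def by simp
    moreover have "i < dd' j" using i unfolding dd'_def by simp
    ultimately have "Yd b C j i k = z' j i"
      using renc_inj[OF b, of "dd' j" "\<lambda>i. Yd b C j i k" "z' j" i] yl z'b[OF j] by simp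
    then show "Yd b C j i k = z j i" using i unfolding z'_def by simp
  qed
  then show ?thesis using kM Yd_L[OF b kM] by auto
qed


lemma sum_mod_inner_set: "(\<Sum>l\<in>A. g l * (f l mod b)) mod (b::nat) = (\<Sum>l\<in>A. g l * f l) mod b"
proof -
  have "(\<Sum>l\<in>A. g l * (f l mod b)) mod b = (\<Sum>l\<in>A. (g l * (f l mod b)) mod b) mod b"
    by (simp add: mod_sum_eq)
  also have "\<dots> = (\<Sum>l\<in>A. (g l * f l) mod b) mod b"
    by (simp add: mod_mult_right_eq)
  also have "\<dots> = (\<Sum>l\<in>A. g l * f l) mod b" by (simp add: mod_sum_eq)
  finally show ?thesis .
qed

lemma sum_swap3:
  fixes dg :: "nat \<Rightarrow> nat"
  shows   "(\<Sum>l<m. dg l * (\<Sum>j<s. \<Sum>i<dd j. c j i * R j i l)) = (\<Sum>j<s. \<Sum>i<dd j. c j i * (\<Sum>l<m. R j i l * dg l))"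
proof -
  have "(\<Sum>l<m. dg l * (\<Sum>j<s. \<Sum>i<dd j. c j i * R j i l)) = (\<Sum>l<m. \<Sum>j<s. \<Sum>i<dd j. dg l * (c j i * R j i l))"
    by (simp add: sum_distrib_left)
  also have "\<dots> = (\<Sum>j<s. \<Sum>l<m. \<Sum>i<dd j. dg l * (c j i * R j i l))" by (rule sum.swap)
  also have "\<dots> = (\<Sum>j<s. \<Sum>i<dd j. \<Sum>l<m. dg l * (c j i * R j i l))" by (simp add: sum.swap[of _ "{..<m}"])
  also have "\<dots> = (\<Sum>j<s. \<Sum>i<dd j. c j i * (\<Sum>l<m. R j i l * dg l))"
    by (simp add: sum_distrib_left algebra_simps)
  finally show ?thesis .
qed

lemma nested_mod:
  fixes Y :: "nat \<Rightarrow> nat \<Rightarrow> nat"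
  shows   "(\<Sum>j<s. \<Sum>i<dd j. c j i * Y j i) mod (b::nat) = (\<Sum>j<s. \<Sum>i<dd j. c j i * (Y j i mod b)) mod b"
proof -
  have "(\<Sum>j<s. \<Sum>i<dd j. c j i * Y j i) mod b = (\<Sum>j<s. (\<Sum>i<dd j. c j i * Y j i) mod b) mod b"
    by (simp add: mod_sum_eq)
  also have "\<dots> = (\<Sum>j<s. (\<Sum>i<dd j. c j i * (Y j i mod b)) mod b) mod b"
    by (simp add: sum_mod_inner_set)
  also have "\<dots> = (\<Sum>j<s. \<Sum>i<dd j. c j i * (Y j i mod b)) mod b"
    by (simp add: mod_sum_eq)
  finally show ?thesis .
qed

lemma renc_digit:
  assumes "x < b ^ d"
  shows "renc b d (\<lambda>i. digit b x (d - 1 - i)) = x"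
proof -
  have "renc b d (\<lambda>i. digit b x (d - 1 - i)) = enc b d (\<lambda>l. digit b x (d - 1 - (d - 1 - l)))"
    by (rule renc_enc)
  also have "\<dots> = enc b d (digit b x)" unfolding enc_def by (intro sum.cong) auto
  also have "\<dots> = x" using assms by (rule enc_digit)
  finally show ?thesis .
qed

lemma card_Zset:
  assumes "finite I"
  shows "card {f :: 'x \<Rightarrow> nat. \<forall>x. (x \<in> I \<longrightarrow> f x < b) \<and> (x \<notin> I \<longrightarrow> f x = 0)} = b ^ card I"
proof -
  let ?Z = "{f :: 'x \<Rightarrow> nat. \<forall>x. (x \<in> I \<longrightarrow> f x < b) \<and> (x \<notin> I \<longrightarrow> f x = 0)}"
  let ?h = "\<lambda>(f :: 'x \<Rightarrow> nat) x. if x \<in> I then f x else 0"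
  have Z: "?Z = ?h ` (PiE I (\<lambda>_. {..<b}))"
  proof
    show "?Z \<subseteq> ?h ` (PiE I (\<lambda>_. {..<b}))"
    proof
      fix f assume f: "f \<in> ?Z"
      have "restrict f I \<in> PiE I (\<lambda>_. {..<b})" using f by (simp add: restrict_PiE_iff)
      moreover have "f = ?h (restrict f I)" using f by (auto simp: fun_eq_iff)
      ultimately show "f \<in> ?h ` (PiE I (\<lambda>_. {..<b}))" by blast
    qed
    show "?h ` (PiE I (\<lambda>_. {..<b})) \<subseteq> ?Z" by (auto simp: PiE_iff)
  qed
  have inj: "inj_on ?h (PiE I (\<lambda>_. {..<b}))"
  proof (rule inj_onI)
    fix f g assume f: "f \<in> PiE I (\<lambda>_. {..<b})" and g: "g \<in> PiE I (\<lambda>_. {..<b})" and e: "?h f = ?h g"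
    show "f = g"
    proof (rule PiE_ext[OF f g])
      fix x assume "x \<in> I"
      then show "f x = g x" using fun_cong[OF e, of x] by simp
    qed
  qed
  have "card ?Z = card (PiE I (\<lambda>_. {..<b}))" unfolding Z by (rule card_image[OF inj])
  also have "\<dots> = b ^ card I" using assms by (simp add: card_PiE)
  finally show ?thesis .
qed

context
  fixes b s m t :: nat and C :: "nat \<Rightarrow> nat \<Rightarrow> nat \<Rightarrow> nat" and wr wc :: "nat \<Rightarrow> nat"
  assumes p: "prime b" and s1: "1 \<le> s" and ds: "is_digital_seq b t s C" and tm: "t \<le> m"
    and wrm: "\<forall>i j. i \<le> j \<longrightarrow> j < s \<longrightarrow> wr i \<le> wr j"
    and wcm: "\<forall>i j. i \<le> j \<longrightarrow> j < s \<longrightarrow> wc i \<le> wc j"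
begin

lemma b2: "b \<ge> 2" using p prime_ge_2_nat by blast

lemma red_sum:
  assumes W: "max (wc (s-1) + t) (wr (s-1)) < m" and j: "j < s"
    and i: "i < m - max (wc (s-1) + t) (wr (s-1))" and k: "k < b ^ (m - wc (s-1))"
  shows "(\<Sum>l<m. reduced m wr wc C j i l * digit b k l) = (\<Sum>l<m - wc (s-1). C j i l * digit b k l)"
proof -
  let ?m' = "m - wc (s-1)"
  have jj: "j \<le> s - 1" "s - 1 < s" using j s1 by auto
  have wrj: "wr j \<le> wr (s-1)" using wrm jj by blast
  have wcj: "wc j \<le> wc (s-1)" using wcm jj by blast
  have "(\<Sum>l<m. reduced m wr wc C j i l * digit b k l) = (\<Sum>l<?m'. reduced m wr wc C j i l * digit b k l)"
  proof (rule sum.mono_neutral_right)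
    show "\<forall>l\<in>{..<m} - {..<?m'}. reduced m wr wc C j i l * digit b k l = 0"
      using digit_high[of b k ?m'] b2 k by auto
  qed auto
  also have "\<dots> = (\<Sum>l<?m'. C j i l * digit b k l)"
  proof (rule sum.cong[OF refl])
    fix l assume l: "l \<in> {..<?m'}"
    have "i < m - wr j" "wr j < m" using i W wrj by auto
    moreover have "l < m - wc j" "wc j < m" using l W wcj by auto
    ultimately show "reduced m wr wc C j i l * digit b k l = C j i l * digit b k l"
      unfolding reduced_def by simp
  qed
  finally show ?thesis .
qed

lemma indep_d0:
  assumes dd: "(\<Sum>j<s. dd j) = m - min m (max (wc (s-1) + t) (wr (s-1)))"
  shows "rows_lin_indep b m s (reduced m wr wc C) dd"
  unfolding rows_lin_indep_def
proof (intro conjI allI impI)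
  let ?W = "max (wc (s-1) + t) (wr (s-1))"
  let ?R = "reduced m wr wc C"
  have ddle: "dd j \<le> m - min m ?W" if "j < s" for j
    unfolding dd[symmetric] using that by (intro member_le_sum) auto
  show "\<And>j. j < s \<Longrightarrow> dd j \<le> m" using ddle by fastforce
  fix c :: "nat \<Rightarrow> nat \<Rightarrow> nat" and j i
  assume cb: "\<forall>j<s. \<forall>i<dd j. c j i < b"
    and cz: "\<forall>l<m. (\<Sum>j<s. \<Sum>i<dd j. c j i * ?R j i l) mod b = 0"
    and j: "j < s" and i: "i < dd j"
  show "c j i = 0"
  proof (rule ccontr)
    assume cnz: "c j i \<noteq> 0"
    have Wm: "?W < m"
    proof (rule ccontr)
      assume "\<not> ?W < m"
      then have "m \<le> ?W" by (simp only: not_less)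
      then have "min m ?W = m" by (rule min_absorb1)
      then have "m - min m ?W = 0" by simp
      then show False using ddle[OF j] i by simp
    qed
    let ?m' = "m - wc (s-1)"
    define z where "z j' i' = (if j' = j \<and> i' = i then 1 else (0::nat))" for j' i'
    have wct: "wc (s-1) + t < m" using Wm by simp
    then have t': "t \<le> ?m'" by linarith
    have e1: "(\<Sum>j<s. dd j) = m - ?W" using Wm dd by simp
    define W where "W = ?W"
    have e2: "W \<ge> wc (s-1) + t" unfolding W_def by simp
    have e3: "(\<Sum>j<s. dd j) = m - W" using e1 unfolding W_def .
    have sd: "(\<Sum>j<s. dd j) \<le> ?m' - t" unfolding e3 using e2 by simp
    have zb: "\<forall>j<s. \<forall>i<dd j. z j i < b" using b2 unfolding z_def by simp
    obtain k where k: "k < b ^ ?m'" and kz: "\<forall>j'<s. \<forall>i'<dd j'. (\<Sum>l<?m'. C j' i' l * digit b k l) mod b = z j' i'"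
      using seq_surj[OF p ds t' sd zb] by blast
    have "(\<Sum>l<m. digit b k l * (\<Sum>j<s. \<Sum>i<dd j. c j i * ?R j i l)) mod b
        = (\<Sum>l<m. digit b k l * ((\<Sum>j<s. \<Sum>i<dd j. c j i * ?R j i l) mod b)) mod b"
      by (rule sum_mod_inner_set[symmetric])
    also have "\<dots> = 0" using cz by simp
    finally have z0: "(\<Sum>l<m. digit b k l * (\<Sum>j<s. \<Sum>i<dd j. c j i * ?R j i l)) mod b = 0" .
    have "(\<Sum>l<m. digit b k l * (\<Sum>j<s. \<Sum>i<dd j. c j i * ?R j i l))
        = (\<Sum>j<s. \<Sum>i<dd j. c j i * (\<Sum>l<m. ?R j i l * digit b k l))" by (rule sum_swap3)
    also have "\<dots> = (\<Sum>j<s. \<Sum>i<dd j. c j i * (\<Sum>l<?m'. C j i l * digit b k l))"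
    proof (intro sum.cong refl)
      fix j' i' assume "j' \<in> {..<s}" "i' \<in> {..<dd j'}"
      then have "j' < s" "i' < m - ?W" using ddle Wm by fastforce+
      then show "c j' i' * (\<Sum>l<m. ?R j' i' l * digit b k l) = c j' i' * (\<Sum>l<?m'. C j' i' l * digit b k l)"
        using red_sum[OF Wm _ _ k] by simp
    qed
    finally have z1: "(\<Sum>j<s. \<Sum>i<dd j. c j i * (\<Sum>l<?m'. C j i l * digit b k l)) mod b = 0" using z0 by simp
    have "(\<Sum>j<s. \<Sum>i<dd j. c j i * ((\<Sum>l<?m'. C j i l * digit b k l) mod b)) mod b =
          (\<Sum>j<s. \<Sum>i<dd j. c j i * (\<Sum>l<?m'. C j i l * digit b k l)) mod b"
      by (rule nested_mod[symmetric])
    then have "(\<Sum>j<s. \<Sum>i<dd j. c j i * ((\<Sum>l<?m'. C j i l * digit b k l) mod b)) mod b = 0"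
      using z1 by simp
    moreover have "(\<Sum>j<s. \<Sum>i<dd j. c j i * ((\<Sum>l<?m'. C j i l * digit b k l) mod b)) = (\<Sum>j'<s. \<Sum>i'<dd j'. c j' i' * z j' i')"
      using kz by (intro sum.cong refl) auto
    moreover have "(\<Sum>j'<s. \<Sum>i'<dd j'. c j' i' * z j' i') = c j i"
    proof -
      have "(\<Sum>j'<s. \<Sum>i'<dd j'. c j' i' * z j' i') = (\<Sum>j'<s. if j' = j then c j i else 0)"
      proof (intro sum.cong refl)
        fix j' assume "j' \<in> {..<s}"
        show "(\<Sum>i'<dd j'. c j' i' * z j' i') = (if j' = j then c j i else 0)"
          using i unfolding z_def by (cases "j' = j") (simp_all add: if_distrib cong: if_cong)
      qed
      also have "\<dots> = c j i" using j by simp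
      finally show ?thesis .
    qed
    ultimately have "c j i mod b = 0" by simp
    moreover have "c j i < b" using cb j i by simp
    ultimately show False using cnz by simp
  qed
qed

lemma quality:
  "is_net b (min m (max (wc (s-1) + t) (wr (s-1)))) m s (\<lambda>k j. net_coord b m (reduced m wr wc C) j k)"
  unfolding is_net_def
proof (intro conjI allI impI)
  let ?W = "max (wc (s-1) + t) (wr (s-1))"
  let ?T = "min m ?W"
  let ?R = "reduced m wr wc C"
  show "?T \<le> m" by simp
  fix d a :: "nat \<Rightarrow> nat"
  assume sd: "(\<Sum>j<s. d j) = m - ?T" and ab: "\<forall>j<s. a j < b ^ d j"
  have dle: "d j \<le> m - ?T" if "j < s" for j
    unfolding sd[symmetric] using that by (intro member_le_sum) auto
  define I where "I = Sigma {..<s} (\<lambda>j. {..<d j})"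
  have finI: "finite I" unfolding I_def by simp
  have cI: "card I = m - ?T" unfolding I_def using sd by simp
  define A :: "nat \<times> nat \<Rightarrow> nat \<Rightarrow> nat" where "A x l = (if x \<in> I then ?R (fst x) (snd x) l else 0)" for x l
  define yv where "yv j k i = (if i < m then (\<Sum>l<m. ?R j i l * digit b k l) mod b else 0)" for j k i
  define za where "za j i = digit b (a j) (d j - 1 - i)" for j i
  define zf where "zf x = (if x \<in> I then za (fst x) (snd x) else 0)" for x
  define Z where "Z = {f :: nat \<times> nat \<Rightarrow> nat. \<forall>x. (x \<in> I \<longrightarrow> f x < b) \<and> (x \<notin> I \<longrightarrow> f x = 0)}"
  have yvb: "\<forall>i. yv j k i < b" for j k using b2 unfolding yv_def by auto
  have nc: "net_coord b m ?R j k = dval b (yv j k)" for j k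
  proof -
    have "dval b (yv j k) = (\<Sum>i<m. real (yv j k i) / real b ^ (i+1))"
      unfolding dval_def by (rule suminf_finite) (auto simp: yv_def)
    then show ?thesis unfolding net_coord_def yv_def by simp
  qed
  have linI: "lin b m A k (j, i) = yv j k i" if "j < s" "i < d j" for j i k
  proof -
    have "i < m" using dle[OF that(1)] that(2) by simp
    then show ?thesis using that unfolding lin_def A_def yv_def I_def by simp
  qed
  have linO: "lin b m A k x = 0" if "x \<notin> I" for x k
    using that unfolding lin_def A_def by simp
  have interval_iff: "(\<forall>j<s. real (a j) / real b ^ d j \<le> net_coord b m ?R j k \<and>
                    net_coord b m ?R j k < real (a j + 1) / real b ^ d j) \<longleftrightarrow> lin b m A k = zf" for k
  proof -
    have step: "(real (a j) / real b ^ d j \<le> net_coord b m ?R j k \<and>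
                    net_coord b m ?R j k < real (a j + 1) / real b ^ d j) \<longleftrightarrow>
                (\<forall>i<d j. yv j k i = za j i)" if j: "j < s" for j
    proof -
      have xnn: "0 \<le> dval b (yv j k)" using b2 yvb by (intro dval_nonneg) auto
      have notr: "\<not> (\<forall>i\<ge>d j. yv j k i = b - 1)"
      proof
        assume "\<forall>i\<ge>d j. yv j k i = b - 1"
        then have "yv j k (d j + m) = b - 1" by simp
        then show False using b2 unfolding yv_def by simp
      qed
      have fl: "\<lfloor>real b ^ d j * dval b (yv j k)\<rfloor> = int (renc b (d j) (yv j k))"
        using floor_dval[OF b2 yvb, of "d j" j k] notr unfolding renc_def by simp
      have "renc b (d j) (za j) = a j" unfolding za_def by (rule renc_digit) (use ab j in simp)
      then have aj: "a j = renc b (d j) (za j)" by simp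
      have zab: "\<forall>i<d j. za j i < b" unfolding za_def using b2 by (simp add: digit_lt)
      have "(real (a j) / real b ^ d j \<le> net_coord b m ?R j k \<and>
                    net_coord b m ?R j k < real (a j + 1) / real b ^ d j) \<longleftrightarrow>
            renc b (d j) (yv j k) = renc b (d j) (za j)"
        unfolding nc interval_iff_floor[OF b2 xnn] fl aj by simp
      also have "\<dots> \<longleftrightarrow> (\<forall>i<d j. yv j k i = za j i)"
      proof
        assume "renc b (d j) (yv j k) = renc b (d j) (za j)"
        then show "\<forall>i<d j. yv j k i = za j i" using renc_inj[OF b2, of "d j" "yv j k" "za j"] yvb zab by blast
      next
        assume "\<forall>i<d j. yv j k i = za j i"
        then show "renc b (d j) (yv j k) = renc b (d j) (za j)" unfolding renc_def by simp
      qed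
      finally show ?thesis .
    qed
    have "(\<forall>j<s. \<forall>i<d j. yv j k i = za j i) \<longleftrightarrow> lin b m A k = zf"
    proof
      assume h: "\<forall>j<s. \<forall>i<d j. yv j k i = za j i"
      show "lin b m A k = zf"
      proof
        fix x show "lin b m A k x = zf x"
        proof (cases "x \<in> I")
          case True
          then obtain j i where x: "x = (j, i)" "j < s" "i < d j" unfolding I_def by auto
          then show ?thesis using h linI[OF x(2,3)] True unfolding zf_def by simp
        next
          case False
          then show ?thesis using linO unfolding zf_def by simp
        qed
      qed
    next
      assume h: "lin b m A k = zf"
      show "\<forall>j<s. \<forall>i<d j. yv j k i = za j i"
      proof (intro allI impI)
        fix j i assume ji: "j < s" "i < d j"
        then have "(j, i) \<in> I" unfolding I_def by simp
        then show "yv j k i = za j i" using fun_cong[OF h, of "(j, i)"] linI[OF ji] unfolding zf_def by simp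
      qed
    qed
    then show ?thesis using step by blast
  qed
  have into: "\<forall>k<b ^ m. lin b m A k \<in> Z"
    unfolding Z_def using linO b2 by (auto simp: lin_lt)
  have onto: "\<forall>z\<in>Z. \<exists>k<b ^ m. lin b m A k = z"
  proof
    fix z assume z: "z \<in> Z"
    show "\<exists>k<b ^ m. lin b m A k = z"
    proof (cases "?W < m")
      case False
      then have "m \<le> ?W" by (simp only: not_less)
      then have "min m ?W = m" by (rule min_absorb1)
      then have "m - ?T = 0" by simp
      then have "I = {}" unfolding I_def using dle by fastforce
      then have "lin b m A 0 = z" using z linO unfolding Z_def by auto
      moreover have "(0::nat) < b ^ m" using b2 by simp
      ultimately show ?thesis by blast
    next
      case True
      let ?m' = "m - wc (s-1)"
      have wct: "wc (s-1) + t < m" using True by simp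
      then have t': "t \<le> ?m'" by linarith
      define W where "W = ?W"
      have e2: "W \<ge> wc (s-1) + t" unfolding W_def by simp
      have e3: "(\<Sum>j<s. d j) = m - W" using sd True unfolding W_def by simp
      have sd': "(\<Sum>j<s. d j) \<le> ?m' - t" unfolding e3 using e2 by simp
      have zb: "\<forall>j<s. \<forall>i<d j. z (j, i) < b" using z unfolding Z_def I_def by auto
      obtain k where k: "k < b ^ ?m'" and kz: "\<forall>j<s. \<forall>i<d j. (\<Sum>l<?m'. C j i l * digit b k l) mod b = z (j, i)"
        using seq_surj[OF p ds t' sd' zb] by blast
      have km: "k < b ^ m"
      proof -
        have "b ^ ?m' \<le> b ^ m" using b2 by (intro power_increasing) auto
        then show ?thesis using k by simp
      qed
      have "lin b m A k = z"
      proof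
        fix x show "lin b m A k x = z x"
        proof (cases "x \<in> I")
          case False
          have "z x = 0" using z False unfolding Z_def by blast
          then show ?thesis using linO[OF False] by simp
        next
          case xI: True
          then obtain j i where x: "x = (j, i)" "j < s" "i < d j" unfolding I_def by auto
          have im: "i < m - ?W" using dle[OF x(2)] x(3) True by simp
          have "lin b m A k x = (\<Sum>l<m. ?R j i l * digit b k l) mod b"
            using xI x unfolding lin_def A_def by simp
          also have "\<dots> = (\<Sum>l<?m'. C j i l * digit b k l) mod b"
            using red_sum[OF True x(2) im k] by simp
          also have "\<dots> = z x" using kz x by simp
          finally show ?thesis .
        qed
      qed
      then show ?thesis using km by blast
    qed
  qed
  have zfZ: "zf \<in> Z" unfolding Z_def zf_def za_def using b2 by (auto simp: digit_lt)
  obtain k1 where k1: "k1 < b ^ m" "lin b m A k1 = zf" using onto zfZ by blast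
  have cZ: "card Z = b ^ (m - ?T)" unfolding Z_def cI[symmetric] by (rule card_Zset[OF finI])
  have main: "b ^ m = card Z * card {k. k < b ^ m \<and> lin b m A k = lin b m A k1}"
  proof (rule fiber_card[OF b2 _ into onto k1(1)])
    have "card Z > 0" using cZ b2 by simp
    then show "finite Z" by (rule card_ge_0_finite)
  qed
  have "{k. k < b ^ m \<and> (\<forall>j<s. real (a j) / real b ^ d j \<le> net_coord b m ?R j k \<and>
                    net_coord b m ?R j k < real (a j + 1) / real b ^ d j)} = {k. k < b ^ m \<and> lin b m A k = lin b m A k1}"
    using interval_iff k1(2) by auto
  moreover have "card {k. k < b ^ m \<and> lin b m A k = lin b m A k1} = b ^ ?T"
  proof -
    have "b ^ (m - ?T) * b ^ ?T = b ^ (m - ?T) * card {k. k < b ^ m \<and> lin b m A k = lin b m A k1}"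
      using main cZ by (simp add: power_add[symmetric])
    moreover have "b ^ (m - ?T) > 0" using b2 by simp
    ultimately show ?thesis using b2 by auto
  qed
  ultimately show "card {k. k < b ^ m \<and> (\<forall>j<s. real (a j) / real b ^ d j \<le> net_coord b m ?R j k \<and>
                    net_coord b m ?R j k < real (a j + 1) / real b ^ d j)} = b ^ ?T" by simp
qed

lemma not_indep_big:
  assumes d: "m - min m (max (wc (s-1)) (wr (s-1))) < d" "d \<le> m"
  shows "\<not> rows_lin_indep b m s (reduced m wr wc C) (\<lambda>j. if j = s - 1 then d else 0)"
proof
  let ?R = "reduced m wr wc C"
  let ?dd = "\<lambda>j. if j = s - 1 then d else (0::nat)"
  let ?j0 = "s - 1"
  have j0: "?j0 < s" using s1 by simp
  assume ind: "rows_lin_indep b m s ?R ?dd"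
  then have indc: "\<And>c. (\<forall>j<s. \<forall>i<?dd j. c j i < b) \<Longrightarrow>
        (\<forall>l<m. (\<Sum>j<s. \<Sum>i<?dd j. c j i * ?R j i l) mod b = 0) \<Longrightarrow> (\<forall>j<s. \<forall>i<?dd j. c j i = 0)"
    unfolding rows_lin_indep_def by blast
  have sumj: "(\<Sum>j<s. \<Sum>i<?dd j. f j i) = (\<Sum>i<d. f ?j0 i)" for f :: "nat \<Rightarrow> nat \<Rightarrow> nat"
  proof -
    have "(\<Sum>j<s. \<Sum>i<?dd j. f j i) = (\<Sum>j<s. if j = ?j0 then (\<Sum>i<d. f ?j0 i) else 0)"
      by (intro sum.cong) auto
    also have "\<dots> = (\<Sum>i<d. f ?j0 i)" using j0 by simp
    finally show ?thesis .
  qed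
  show False
  proof (cases "wc ?j0 \<le> wr ?j0")
    case True
    then have dd: "m - min m (wr ?j0) < d" using d(1) by (simp add: max_def)
    define c where "c j i = (if j = ?j0 \<and> i = d - 1 then 1 else (0::nat))" for j i
    have Rz: "?R ?j0 (d - 1) l = 0" for l using dd unfolding reduced_def by auto
    have "\<forall>j<s. \<forall>i<?dd j. c j i = 0"
    proof (rule indc)
      show "\<forall>j<s. \<forall>i<?dd j. c j i < b" using b2 unfolding c_def by simp
      show "\<forall>l<m. (\<Sum>j<s. \<Sum>i<?dd j. c j i * ?R j i l) mod b = 0"
      proof (intro allI impI)
        fix l assume "l < m"
        have "(\<Sum>j<s. \<Sum>i<?dd j. c j i * ?R j i l) = (\<Sum>i<d. c ?j0 i * ?R ?j0 i l)" by (rule sumj)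
        also have "\<dots> = (\<Sum>i<d. if i = d - 1 then ?R ?j0 (d - 1) l else 0)"
          unfolding c_def by (intro sum.cong) auto
        also have "\<dots> = 0" using Rz by simp
        finally have S0: "(\<Sum>j<s. \<Sum>i<?dd j. c j i * ?R j i l) = 0" .
        show "(\<Sum>j<s. \<Sum>i<?dd j. c j i * ?R j i l) mod b = 0" by (simp only: S0 mod_0)
      qed
    qed
    moreover have "d - 1 < ?dd ?j0" using dd by simp
    ultimately have "c ?j0 (d - 1) = 0" using j0 by blast
    then show False unfolding c_def by simp
  next
    case False
    then have dd: "m - min m (wc ?j0) < d" using d(1) by (simp add: max_def)
    define k0 where "k0 = m - min m (wc ?j0)"
    have Rz: "?R ?j0 i l = 0" if "l \<ge> k0" for i l using that unfolding reduced_def k0_def by auto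
    define h where "h c' = enc b k0 (\<lambda>l. (\<Sum>i<d. digit b c' i * ?R ?j0 i l) mod b)" for c'
    have hlt: "h c' < b ^ k0" for c' unfolding h_def using b2 by (intro enc_less) auto
    have "\<not> inj_on h {..<b ^ d}"
    proof
      assume "inj_on h {..<b ^ d}"
      then have "card {..<b ^ d} \<le> card {..<b ^ k0}" by (rule card_inj_on_le) (auto simp: hlt)
      moreover have "b ^ k0 < b ^ d" using b2 dd unfolding k0_def by (intro power_strict_increasing) auto
      ultimately show False by simp
    qed
    then obtain c1 c2 where c1: "c1 < b ^ d" and c2: "c2 < b ^ d" and ne: "c1 \<noteq> c2" and heq: "h c1 = h c2"
      unfolding inj_on_def by auto
    have leq: "(\<Sum>i<d. digit b c1 i * ?R ?j0 i l) mod b = (\<Sum>i<d. digit b c2 i * ?R ?j0 i l) mod b"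
      if l: "l < k0" for l
    proof -
      have "digit b (h c1) l = (\<Sum>i<d. digit b c1 i * ?R ?j0 i l) mod b"
        unfolding h_def using b2 l by (subst digit_enc) auto
      moreover have "digit b (h c2) l = (\<Sum>i<d. digit b c2 i * ?R ?j0 i l) mod b"
        unfolding h_def using b2 l by (subst digit_enc) auto
      ultimately show ?thesis using heq by simp
    qed
    define c where "c j i = (if j = ?j0 then (digit b c1 i + (b - 1) * digit b c2 i) mod b else 0)" for j i
    have "\<forall>j<s. \<forall>i<?dd j. c j i = 0"
    proof (rule indc)
      show "\<forall>j<s. \<forall>i<?dd j. c j i < b" using b2 unfolding c_def by simp
      show "\<forall>l<m. (\<Sum>j<s. \<Sum>i<?dd j. c j i * ?R j i l) mod b = 0"
      proof (intro allI impI)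
        fix l assume "l < m"
        let ?X = "\<Sum>i<d. digit b c1 i * ?R ?j0 i l"
        let ?Y = "\<Sum>i<d. digit b c2 i * ?R ?j0 i l"
        have "(\<Sum>j<s. \<Sum>i<?dd j. c j i * ?R j i l) = (\<Sum>i<d. ?R ?j0 i l * ((digit b c1 i + (b - 1) * digit b c2 i) mod b))"
          unfolding sumj c_def by (simp add: mult.commute)
        then have "(\<Sum>j<s. \<Sum>i<?dd j. c j i * ?R j i l) mod b = (\<Sum>i<d. ?R ?j0 i l * (digit b c1 i + (b - 1) * digit b c2 i)) mod b"
          by (simp add: sum_mod_inner_set)
        also have "(\<Sum>i<d. ?R ?j0 i l * (digit b c1 i + (b - 1) * digit b c2 i)) = ?X + (b - 1) * ?Y"
          by (simp add: sum.distrib sum_distrib_left algebra_simps)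
        also have "(?X + (b - 1) * ?Y) mod b = 0"
        proof (cases "l < k0")
          case True
          have "(?X + (b - 1) * ?Y) mod b = (?X mod b + (b - 1) * ?Y) mod b" by (simp add: mod_add_left_eq)
          also have "\<dots> = (?Y mod b + (b - 1) * ?Y) mod b" using leq[OF True] by simp
          also have "\<dots> = (?Y + (b - 1) * ?Y) mod b" by (simp add: mod_add_left_eq)
          also have "?Y + (b - 1) * ?Y = b * ?Y" using b2 by (simp add: diff_mult_distrib)
          finally show ?thesis by simp
        next
          case False
          then show ?thesis using Rz by simp
        qed
        finally show "(\<Sum>j<s. \<Sum>i<?dd j. c j i * ?R j i l) mod b = 0" .
      qed
    qed
    moreover obtain i where i: "i < d" "digit b c1 i \<noteq> digit b c2 i"
    proof (rule ccontr)
      assume "\<not> thesis"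
      then have "\<forall>i<d. digit b c1 i = digit b c2 i" using that by blast
      then have "enc b d (digit b c1) = enc b d (digit b c2)" unfolding enc_def by simp
      then show False using c1 c2 ne by (simp add: enc_digit)
    qed
    ultimately have cz: "c ?j0 i = 0" using j0 by simp
    have "(digit b c1 i + (b - 1) * digit b c2 i) mod b = (digit b c2 i + (b - 1) * digit b c2 i) mod b"
    proof -
      have "digit b c2 i + (b - 1) * digit b c2 i = b * digit b c2 i" using b2 by (simp add: diff_mult_distrib)
      then show ?thesis using cz unfolding c_def by simp
    qed
    then have "digit b c1 i = digit b c2 i"
      by (rule mod_add_cancel_lt) (use b2 in \<open>simp_all add: digit_lt\<close>)
    then show False using i by simp
  qed
qed

end


theorem mainTheorem4:
  fixes b s m t :: nat and C :: "nat \<Rightarrow> nat \<Rightarrow> nat \<Rightarrow> nat" and wr wc :: "nat \<Rightarrow> nat"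
  assumes "prime b" and "1 \<le> s" and "1 \<le> m"
    and "is_digital_seq b t s C" and "t \<le> m"
    and "wr 0 = 0" and "\<forall>i j. i \<le> j \<longrightarrow> j < s \<longrightarrow> wr i \<le> wr j"
    and "wc 0 = 0" and "\<forall>i j. i \<le> j \<longrightarrow> j < s \<longrightarrow> wc i \<le> wc j"
  shows "max 0 (int m - int (max (wc (s - 1) + t) (wr (s - 1))))
           \<le> int (lin_indep_param b m s (reduced m wr wc C))
       \<and> int (lin_indep_param b m s (reduced m wr wc C))
           \<le> max 0 (int m - int (max (wc (s - 1)) (wr (s - 1))))
       \<and> min_quality b m s (reduced m wr wc C) \<le> min m (max (wc (s - 1) + t) (wr (s - 1)))"
proof -
  note ctx = assms(1,2,4,5,7,9)
  let ?R = "reduced m wr wc C"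
  let ?W = "max (wc (s - 1) + t) (wr (s - 1))"
  let ?M2 = "max (wc (s - 1)) (wr (s - 1))"
  define P where "P d = (\<forall>dd. (\<Sum>j<s. dd j) = d \<longrightarrow> rows_lin_indep b m s ?R dd)" for d
  have G: "lin_indep_param b m s ?R = Greatest P" unfolding lin_indep_param_def P_def by simp
  have P0: "P 0"
    unfolding P_def rows_lin_indep_def by auto
  have Pb: "y \<le> m" if "P y" for y
  proof -
    have "(\<Sum>j<s. (\<lambda>j. if j = 0 then y else 0) j) = y" using assms(2) by simp
    then have "rows_lin_indep b m s ?R (\<lambda>j. if j = 0 then y else 0)" using that unfolding P_def by blast
    then show ?thesis using assms(2) unfolding rows_lin_indep_def by auto
  qed
  have Pd0: "P (m - min m ?W)" unfolding P_def using indep_d0[OF ctx] by blast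
  have low: "m - min m ?W \<le> Greatest P" by (rule Greatest_le_nat[where P=P, OF Pd0 Pb])
  have PG: "P (Greatest P)" by (rule GreatestI_nat[where P=P, OF P0 Pb])
  have up: "Greatest P \<le> m - min m ?M2"
  proof (rule ccontr)
    assume "\<not> ?thesis"
    then have gt: "m - min m ?M2 < Greatest P" by simp
    have le: "Greatest P \<le> m" by (rule Pb[OF PG])
    have "(\<Sum>j<s. (\<lambda>j. if j = s - 1 then Greatest P else 0) j) = Greatest P" using assms(2) by simp
    then have "rows_lin_indep b m s ?R (\<lambda>j. if j = s - 1 then Greatest P else 0)" using PG unfolding P_def by blast
    then show False using not_indep_big[OF ctx gt le] by simp
  qed
  have q: "min_quality b m s ?R \<le> min m ?W"
    unfolding min_quality_def by (rule Least_le) (rule quality[OF ctx])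
  have i1: "max 0 (int m - int ?W) \<le> int (Greatest P)" using low by linarith
  have i2: "int (Greatest P) \<le> max 0 (int m - int ?M2)" using up by linarith
  show ?thesis unfolding G using i1 i2 q by blast
qed


end
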